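(* Let $X$ be a $T_0$ space, $x\in X$ and $(x_i)_{i\in I}$ a net in $X$. Consider: (1) $(x_i)_{i\in I}$ $GSI_2$-converges to $x$. (2) For every $F\in X^{(<\omega)}$ with $F\ll_{I_2}x$ and every open set $U$ of $X$ with $F\subseteq U$, $x_i\in U$ eventually. Then (1) implies (2), and if $X$ is $QI_2$-continuous, then (1) and (2) are equivalent.
   Context: For a $T_0$ space $X$, the specialization order is $x\le y$ iff $x\in \mathrm{cl}\{y\}$; $\uparrow A=\{x: a\le x\text{ for some } a\in A\}$, $\uparrow x=\uparrow\{x\}$; $A^\uparrow$, $A^\downarrow$ are the sets of upper and lower bounds of $A$, and $A^\delta=(A^\uparrow)^\downarrow$. A nonempty subset $A$ of a space is irreducible if whenever $A\subseteq F_1\cup F_2$ with $F_1,F_2$ closed, $A\subseteq F_1$ or $A\subseteq F_2$. $X^{(<\omega)}$ is the set of nonempty finite subsets of $X$. $P_S(X)$ is the set of nonempty compact saturated (upper) subsets of $X$ with the upper Vietoris topology, basis $\{\square U: U\text{ open}\}$, $\square U=\{Q: Q\subseteq U\}$. A net is eventually in $U$ if from some index on all its terms lie in $U$. For $A\subseteq X$, $x\in X$, $A\ll_{I_2}x$ means: for every irreducible $D\subseteq X$ with $x\in D^\delta$, $A\cap\mathrm{cl}D\ne\emptyset$. For $x\in X$, $w(x)=\{\uparrow F: F\in X^{(<\omega)}, F\ll_{I_2}x\}$. $X$ is $QI_2$-continuous if for every $x$, $w(x)$ is irreducible in $P_S(X)$ and $\uparrow x=\bigcap w(x)$. A net $(x_i)_{i\in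 I}$ $GSI_2$-converges to $x$ if there exists $\mathcal F\subseteq X^{(<\omega)}$ with $\{\uparrow G: G\in\mathcal F\}$ irreducible in $P_S(X)$ such that (i) for every open $U$, if $\uparrow G\subseteq U$ for some $G\in\mathcal F$ then $x_i\in U$ eventually, and (ii) $\bigcap_{G\in\mathcal F}\uparrow G\subseteq\uparrow x$. *)

theory Defs
  imports "HOL-Analysis.Analysis"
begin

definition spec_le :: "'a topology \<Rightarrow> 'a \<Rightarrow> 'a \<Rightarrow> bool" where
  "spec_le X x y \<longleftrightarrow> x \<in> topspace X \<and> y \<in> topspace X \<and> x \<in> X closure_of {y}"

definition up_set :: "'a topology \<Rightarrow> 'a set \<Rightarrow> 'a set" where
  "up_set X A = {x \<in> topspace X. \<exists>a\<in>A. spec_le X a x}"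

definition upper_bounds :: "'a topology \<Rightarrow> 'a set \<Rightarrow> 'a set" where
  "upper_bounds X A = {y \<in> topspace X. \<forall>a\<in>A. spec_le X a y}"

definition lower_bounds :: "'a topology \<Rightarrow> 'a set \<Rightarrow> 'a set" where
  "lower_bounds X A = {y \<in> topspace X. \<forall>a\<in>A. spec_le X y a}"

definition delta_cut :: "'a topology \<Rightarrow> 'a set \<Rightarrow> 'a set" where
  "delta_cut X A = lower_bounds X (upper_bounds X A)"

definition irreducible_in :: "'a topology \<Rightarrow> 'a set \<Rightarrow> bool" where
  "irreducible_in X A \<longleftrightarrow> A \<noteq> {} \<and> A \<subseteq> topspace X \<and>
     (\<forall>F1 F2. closedin X F1 \<and> closedin X F2 \<and> A \<subseteq> F1 \<union> F2 \<longrightarrow> A \<subseteq> F1 \<or> A \<subseteq> F2)"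

definition fin_subsets :: "'a topology \<Rightarrow> 'a set set" where
  "fin_subsets X = {F. finite F \<and> F \<noteq> {} \<and> F \<subseteq> topspace X}"

definition PS_carrier :: "'a topology \<Rightarrow> 'a set set" where
  "PS_carrier X = {Q. Q \<noteq> {} \<and> compactin X Q \<and> up_set X Q = Q}"

definition box_set :: "'a topology \<Rightarrow> 'a set \<Rightarrow> 'a set set" where
  "box_set X U = {Q \<in> PS_carrier X. Q \<subseteq> U}"

definition PS :: "'a topology \<Rightarrow> 'a set topology" where
  "PS X = topology_generated_by {box_set X U | U. openin X U}"

definition way_below_I2 :: "'a topology \<Rightarrow> 'a set \<Rightarrow> 'a \<Rightarrow> bool" where
  "way_below_I2 X A x \<longleftrightarrow>
     (\<forall>D. irreducible_in X D \<and> x \<in> delta_cut X D \<longrightarrow> A \<inter> (X closure_of D) \<noteq> {})"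

definition w_I2 :: "'a topology \<Rightarrow> 'a \<Rightarrow> 'a set set" where
  "w_I2 X x = {up_set X F | F. F \<in> fin_subsets X \<and> way_below_I2 X F x}"

definition QI2_continuous :: "'a topology \<Rightarrow> bool" where
  "QI2_continuous X \<longleftrightarrow>
     (\<forall>x\<in>topspace X. irreducible_in (PS X) (w_I2 X x) \<and> up_set X {x} = \<Inter>(w_I2 X x))"

definition directed_index :: "'i set \<Rightarrow> ('i \<Rightarrow> 'i \<Rightarrow> bool) \<Rightarrow> bool" where
  "directed_index I le \<longleftrightarrow> I \<noteq> {} \<and> (\<forall>i\<in>I. le i i) \<and>
     (\<forall>i\<in>I. \<forall>j\<in>I. \<forall>k\<in>I. le i j \<and> le j k \<longrightarrow> le i k) \<and>
     (\<forall>i\<in>I. \<forall>j\<in>I. \<exists>k\<in>I. le i k \<and> le j k)"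

definition eventually_in :: "'i set \<Rightarrow> ('i \<Rightarrow> 'i \<Rightarrow> bool) \<Rightarrow> ('i \<Rightarrow> 'a) \<Rightarrow> 'a set \<Rightarrow> bool" where
  "eventually_in I le xn U \<longleftrightarrow> (\<exists>i0\<in>I. \<forall>i\<in>I. le i0 i \<longrightarrow> xn i \<in> U)"

definition GSI2_converges ::
    "'a topology \<Rightarrow> 'i set \<Rightarrow> ('i \<Rightarrow> 'i \<Rightarrow> bool) \<Rightarrow> ('i \<Rightarrow> 'a) \<Rightarrow> 'a \<Rightarrow> bool" where
  "GSI2_converges X I le xn x \<longleftrightarrow>
     (\<exists>\<F>. \<F> \<subseteq> fin_subsets X \<and> irreducible_in (PS X) (up_set X ` \<F>) \<and>
        (\<forall>U. openin X U \<longrightarrow> (\<exists>G\<in>\<F>. up_set X G \<subseteq> U) \<longrightarrow> eventually_in I le xn U) \<and>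
        \<Inter>(up_set X ` \<F>) \<subseteq> up_set X {x})"

end

theory Submission
  imports Defs
begin

lemma spec_le_trans:
  assumes "spec_le X a b" "spec_le X b c" shows "spec_le X a c"
proof -
  have "X closure_of {b} \<subseteq> X closure_of {c}"
    using assms(2) by (simp add: closure_of_minimal spec_le_def)
  then show ?thesis using assms by (auto simp: spec_le_def)
qed

lemma topspace_PS: "topspace (PS X) = PS_carrier X"
proof -
  have "\<Union>{box_set X U | U. openin X U} = PS_carrier X"
  proof
    show "\<Union>{box_set X U | U. openin X U} \<subseteq> PS_carrier X"
      by (auto simp: box_set_def)
    show "PS_carrier X \<subseteq> \<Union>{box_set X U | U. openin X U}"
    proof
      fix Q assume "Q \<in> PS_carrier X"
      then have "Q \<in> box_set X (topspace X)"
        by (auto simp: box_set_def PS_carrier_def compactin_subset_topspace)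
      then show "Q \<in> \<Union>{box_set X U | U. openin X U}" by blast
    qed
  qed
  then show ?thesis by (simp add: PS_def)
qed

lemma openin_box: "openin X U \<Longrightarrow> openin (PS X) (box_set X U)"
  unfolding PS_def by (rule topology_generated_by_Basis) blast

lemma irr_open:
  assumes "irreducible_in T A" "openin T O1" "openin T O2" "O1 \<inter> A \<noteq> {}" "O2 \<inter> A \<noteq> {}"
  shows "O1 \<inter> O2 \<inter> A \<noteq> {}"
proof
  assume e: "O1 \<inter> O2 \<inter> A = {}"
  have c1: "closedin T (topspace T - O1)" "closedin T (topspace T - O2)"
    using assms by auto
  have "A \<subseteq> topspace T" using assms(1) by (simp add: irreducible_in_def)
  then have "A \<subseteq> (topspace T - O1) \<union> (topspace T - O2)" using e by blast
  then have "A \<subseteq> topspace T - O1 \<or> A \<subseteq> topspace T - O2"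
    using assms(1) c1 unfolding irreducible_in_def by blast
  then show False using assms(4,5) by blast
qed

lemma rudin:
  assumes irr: "irreducible_in (PS X) K" and U: "openin X U" and nK: "\<forall>k\<in>K. \<not> k \<subseteq> U"
  shows "\<exists>A. irreducible_in X A \<and> closedin X A \<and> A \<inter> U = {} \<and> (\<forall>k\<in>K. A \<inter> k \<noteq> {})"
proof -
  have KPS: "K \<subseteq> PS_carrier X" using irr by (simp add: irreducible_in_def topspace_PS)
  define Fam where "Fam = {W. openin X W \<and> U \<subseteq> W \<and> (\<forall>k\<in>K. \<not> k \<subseteq> W)}"
  have "\<forall>C\<in>chains Fam. \<exists>V\<in>Fam. \<forall>Y\<in>C. Y \<subseteq> V"
  proof
    fix C assume C: "C \<in> chains Fam"
    show "\<exists>V\<in>Fam. \<forall>Y\<in>C. Y \<subseteq> V"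
    proof (cases "C = {}")
      case True then show ?thesis using U nK by (auto simp: Fam_def)
    next
      case False
      have CO: "C \<subseteq> Fam" using C by (rule chainsD2)
      have ch: "subset.chain Fam C" using C by (simp add: chains_alt_def)
      have "\<Union>C \<in> Fam"
        unfolding Fam_def
      proof (intro CollectI conjI ballI)
        show "openin X (\<Union>C)" using CO by (auto simp: Fam_def)
        show "U \<subseteq> \<Union>C" using CO False by (auto simp: Fam_def)
        fix k assume k: "k \<in> K"
        show "\<not> k \<subseteq> \<Union>C"
        proof
          assume sub: "k \<subseteq> \<Union>C"
          have "compactin X k" "k \<noteq> {}" using KPS k by (auto simp: PS_carrier_def)
          have opC: "\<forall>W\<in>C. openin X W" using CO by (auto simp: Fam_def)
          obtain F where F: "finite F" "F \<subseteq> C" "k \<subseteq> \<Union>F"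
          proof -
            have "\<forall>U. (\<forall>x\<in>U. openin X x) \<and> k \<subseteq> \<Union>U \<longrightarrow> (\<exists>F. finite F \<and> F \<subseteq> U \<and> k \<subseteq> \<Union>F)"
              using \<open>compactin X k\<close> unfolding compactin_def by (rule conjunct2)
            then have "\<exists>F. finite F \<and> F \<subseteq> C \<and> k \<subseteq> \<Union>F" using sub opC by blast
            then show ?thesis using that by blast
          qed
          then have "F \<noteq> {}" using \<open>k \<noteq> {}\<close> by auto
          have chS: "\<forall>a\<in>C. \<forall>b\<in>C. a \<subseteq> b \<or> b \<subseteq> a"
            using C unfolding chains_def chain_subset_def by blast
          have "F \<in> chains Fam" unfolding chains_def chain_subset_def using F(2) CO chS by blast
          then have "subset.chain Fam F" by (simp add: chains_alt_def)
          then have "\<Union>F \<in> F" using Union_in_chain F(1) \<open>F \<noteq> {}\<close> by blast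
          then have "\<Union>F \<in> Fam" using F(2) CO by blast
          then show False using k F(3) by (auto simp: Fam_def)
        qed
      qed
      then show ?thesis by blast
    qed
  qed
  then obtain M where M: "M \<in> Fam" and max: "\<forall>Y\<in>Fam. M \<subseteq> Y \<longrightarrow> Y = M"
    using Zorn_Lemma2 by blast
  define A where "A = topspace X - M"
  have Mo: "openin X M" and UM: "U \<subseteq> M" and MK: "\<forall>k\<in>K. \<not> k \<subseteq> M" using M by (auto simp: Fam_def)
  have clA: "closedin X A" using Mo by (simp add: A_def closedin_diff)
  have meet: "\<forall>k\<in>K. A \<inter> k \<noteq> {}"
  proof
    fix k assume "k \<in> K"
    then have "compactin X k" "\<not> k \<subseteq> M" using KPS MK
      by (auto simp: PS_carrier_def)
    then have "k \<subseteq> topspace X" "\<not> k \<subseteq> M" by (auto simp: compactin_subset_topspace)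
    then show "A \<inter> k \<noteq> {}" by (auto simp: A_def)
  qed
  have Kne: "K \<noteq> {}" using irr by (simp add: irreducible_in_def)
  have irrA: "irreducible_in X A"
    unfolding irreducible_in_def
  proof (intro conjI allI impI)
    show "A \<noteq> {}" using meet Kne by blast
    show "A \<subseteq> topspace X" by (simp add: A_def)
    fix B1 B2 assume hB: "closedin X B1 \<and> closedin X B2 \<and> A \<subseteq> B1 \<union> B2"
    show "A \<subseteq> B1 \<or> A \<subseteq> B2"
    proof (rule ccontr)
      assume nn: "\<not> (A \<subseteq> B1 \<or> A \<subseteq> B2)"
      have ex: "\<exists>k\<in>K. k \<subseteq> M \<union> (topspace X - B)" if "closedin X B" "\<not> A \<subseteq> B" for B
      proof (rule ccontr)
        assume "\<not> ?thesis"
        then have "M \<union> (topspace X - B) \<in> Fam" using Mo UM that(1) by (auto simp: Fam_def)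
        moreover have "M \<subseteq> M \<union> (topspace X - B)" by (rule Un_upper1)
        ultimately have "M \<union> (topspace X - B) = M" using max by blast
        then have "topspace X - B \<subseteq> M" by blast
        then have "A \<subseteq> B" unfolding A_def by blast
        then show False using that by blast
      qed
      obtain k1 where k1: "k1 \<in> K" "k1 \<subseteq> M \<union> (topspace X - B1)" using ex hB nn by blast
      obtain k2 where k2: "k2 \<in> K" "k2 \<subseteq> M \<union> (topspace X - B2)" using ex hB nn by blast
      have o1: "openin X (M \<union> (topspace X - B1))" "openin X (M \<union> (topspace X - B2))"
        using Mo hB by auto
      have "box_set X (M \<union> (topspace X - B1)) \<inter> box_set X (M \<union> (topspace X - B2)) \<inter> K \<noteq> {}"
        apply (rule irr_open[OF irr openin_box[OF o1(1)] openin_box[OF o1(2)]])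
        using k1 k2 KPS by (auto simp: box_set_def)
      then obtain k3 where k3: "k3 \<in> K" "k3 \<subseteq> M \<union> (topspace X - B1)" "k3 \<subseteq> M \<union> (topspace X - B2)"
        by (auto simp: box_set_def)
      have "k3 \<subseteq> M"
      proof
        fix z assume z: "z \<in> k3"
        show "z \<in> M"
        proof (rule ccontr)
          assume "z \<notin> M"
          then have "z \<in> topspace X" "z \<notin> B1" "z \<notin> B2" using z k3 by blast+
          then have "z \<in> A" using \<open>z \<notin> M\<close> by (simp add: A_def)
          then show False using hB \<open>z \<notin> B1\<close> \<open>z \<notin> B2\<close> by blast
        qed
      qed
      then show False using MK k3(1) by blast
    qed
  qed
  show ?thesis using irrA clA meet UM by (auto simp: A_def)
qed

theorem proposition4p6:
  fixes X :: "'a topology" and I :: "'i set" and le :: "'i \<Rightarrow> 'i \<Rightarrow> bool"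
    and xn :: "'i \<Rightarrow> 'a" and x :: 'a
  assumes "t0_space X" and "x \<in> topspace X"
    and "directed_index I le" and "\<forall>i\<in>I. xn i \<in> topspace X"
  shows "(GSI2_converges X I le xn x \<longrightarrow>
           (\<forall>F\<in>fin_subsets X. way_below_I2 X F x \<longrightarrow>
              (\<forall>U. openin X U \<and> F \<subseteq> U \<longrightarrow> eventually_in I le xn U)))
       \<and> (QI2_continuous X \<longrightarrow>
           (GSI2_converges X I le xn x \<longleftrightarrow>
           (\<forall>F\<in>fin_subsets X. way_below_I2 X F x \<longrightarrow>
              (\<forall>U. openin X U \<and> F \<subseteq> U \<longrightarrow> eventually_in I le xn U))))"
proof -
  have one: "(\<forall>F\<in>fin_subsets X. way_below_I2 X F x \<longrightarrow>
              (\<forall>U. openin X U \<and> F \<subseteq> U \<longrightarrow> eventually_in I le xn U))"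
    if conv: "GSI2_converges X I le xn x"
  proof (intro ballI impI allI)
    fix F U assume F: "F \<in> fin_subsets X" and wb: "way_below_I2 X F x" and U: "openin X U \<and> F \<subseteq> U"
    obtain FF where FF: "FF \<subseteq> fin_subsets X" "irreducible_in (PS X) (up_set X ` FF)"
      "\<forall>U. openin X U \<longrightarrow> (\<exists>G\<in>FF. up_set X G \<subseteq> U) \<longrightarrow> eventually_in I le xn U"
      "\<Inter>(up_set X ` FF) \<subseteq> up_set X {x}"
      using conv unfolding GSI2_converges_def by blast
    show "eventually_in I le xn U"
    proof (cases "\<exists>G\<in>FF. up_set X G \<subseteq> U")
      case True then show ?thesis using FF(3) U by blast
    next
      case False
      then have nK: "\<forall>k\<in>up_set X ` FF. \<not> k \<subseteq> U" by blast
      have Uo: "openin X U" using U by blast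
      obtain A where A: "irreducible_in X A" "closedin X A" "A \<inter> U = {}"
        "\<forall>k\<in>up_set X ` FF. A \<inter> k \<noteq> {}"
        using rudin[OF FF(2) Uo nK] by blast
      have "x \<in> delta_cut X A"
        unfolding delta_cut_def lower_bounds_def
      proof (intro CollectI conjI ballI)
        show "x \<in> topspace X" by (rule assms(2))
        fix y assume y: "y \<in> upper_bounds X A"
        have "y \<in> \<Inter>(up_set X ` FF)"
        proof (rule InterI)
          fix k assume "k \<in> up_set X ` FF"
          then obtain G where G: "G \<in> FF" "k = up_set X G" by blast
          then obtain a where a: "a \<in> A" "a \<in> up_set X G" using A(4) by blast
          then obtain g where "g \<in> G" and ga: "spec_le X g a" by (auto simp: up_set_def)
          have ay: "spec_le X a y" using y a by (auto simp: upper_bounds_def)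
          have "spec_le X g y" by (rule spec_le_trans[OF ga ay])
          moreover have "y \<in> topspace X" using y by (simp add: upper_bounds_def)
          ultimately show "y \<in> k" using G \<open>g \<in> G\<close> by (auto simp: up_set_def)
        qed
        then have "y \<in> up_set X {x}" using FF(4) by blast
        then show "spec_le X x y" by (simp add: up_set_def)
      qed
      then have "F \<inter> X closure_of A \<noteq> {}" using wb A(1) unfolding way_below_I2_def by blast
      moreover have "X closure_of A = A" using A(2) by (simp add: closure_of_closedin)
      ultimately show ?thesis using A(3) U by blast
    qed
  qed
  have two: "GSI2_converges X I le xn x"
    if q: "QI2_continuous X" and h: "\<forall>F\<in>fin_subsets X. way_below_I2 X F x \<longrightarrow>
              (\<forall>U. openin X U \<and> F \<subseteq> U \<longrightarrow> eventually_in I le xn U)"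
  proof -
    define FF where "FF = {F \<in> fin_subsets X. way_below_I2 X F x}"
    have eq: "up_set X ` FF = w_I2 X x" by (auto simp: FF_def w_I2_def)
    have sub: "G \<subseteq> up_set X G" if "G \<in> fin_subsets X" for G
    proof
      fix g assume g: "g \<in> G"
      then have gt: "g \<in> topspace X" using that by (auto simp: fin_subsets_def)
      then have "g \<in> X closure_of {g}" using closure_of_subset[of "{g}" X] by blast
      then show "g \<in> up_set X G" using g gt by (auto simp: up_set_def spec_le_def)
    qed
    show ?thesis unfolding GSI2_converges_def
    proof (intro exI[of _ FF] conjI allI impI)
      show "FF \<subseteq> fin_subsets X" by (auto simp: FF_def)
      show "irreducible_in (PS X) (up_set X ` FF)" using q assms(2) eq by (simp add: QI2_continuous_def)
      show "\<Inter>(up_set X ` FF) \<subseteq> up_set X {x}" using q assms(2) eq by (simp add: QI2_continuous_def)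
      fix U assume "openin X U" "\<exists>G\<in>FF. up_set X G \<subseteq> U"
      then obtain G where G: "G \<in> FF" "up_set X G \<subseteq> U" by blast
      then have Gf: "G \<in> fin_subsets X" "way_below_I2 X G x" by (auto simp: FF_def)
      have "G \<subseteq> U" using sub[OF Gf(1)] G(2) by blast
      then show "eventually_in I le xn U" using h Gf \<open>openin X U\<close> by blast
    qed
  qed
  show ?thesis using one two by blast
qed

end
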